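(* In the setting below, assume $\mathbb{P}(X=x)=0$ and $\mathbb{E}[\mathbb{I}_{\bar B_r}(X)|\eta(X)-\eta(x)|]>0$ for all $r>0$. Let $(r_m)_{m\ge m_1}$ be the $\alpha$-sequence at $x$ for some $\alpha\in(0,1)$, and suppose $x$ is a Lebesgue point for $\eta$ with respect to $\mathbb{P}_X$. Then the following are equivalent: (i) $\mathbb{E}[|\eta(X^x_m)-\eta(x)|]\to 0$ as $m\to\infty$; (ii) $\mathbb{E}[\mathbb{I}_{S_{r_m}}(X^x_m)|\eta(X^x_m)-\eta(x)|]\to 0$ as $m\to\infty$.
   Context: Let $(\mathcal{X},d)$ be a metric space with its Borel $\sigma$-algebra, let $(\Omega,\mathcal{F},\mathbb{P})$ be a probability space, and let $X,X_1,X_2,\dots$ be i.i.d. $\mathcal{X}$-valued random variables with common law $\mathbb{P}_X$. For $x\in\mathcal{X}$ and $r>0$ write $B_r=\{x':d(x,x')<r\}$, $\bar B_r=\{x':d(x,x')\le r\}$ and $S_r=\{x':d(x,x')=r\}$. The support of $\mathbb{P}_X$ is the set of $x$ such that $\mathbb{P}_X(\bar B_r(x))>0$ for all $r>0$. Fix $x$ in the support of $\mathbb{P}_X$ and a bounded measurable $\eta:\mathcal{X}\to\mathbb{R}$. For each $m\in\mathbb{N}$, a nearest neighbor of $x$ among $X_1,\dots,X_m$ is a measurable $X^x_m:\Omega\to\mathcal{X}$ with $X^x_m(\omega)\in\arg\min_{x'\in\{X_1(\omega),\dots,X_m(\omega)\}}d(x,x')$ for every $\omega\in\Omega$; fix such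 a sequence $(X^x_m)_{m\in\mathbb{N}}$. The point $x$ is a Lebesgue point if $\mathbb{E}[\mathbb{I}_{\bar B_r}(X)\,|\eta(X)-\eta(x)|]/\mathbb{P}_X(\bar B_r)\to 0$ as $r\to 0^+$. For $\alpha\in(0,1)$ and $r>0$ define $M_\alpha(r)=\big(\mathbb{E}[\mathbb{I}_{\bar B_r}(X)|\eta(X)-\eta(x)|]\big)^{\alpha}\big(\mathbb{P}_X(\bar B_r)\big)^{1-\alpha}$; let $m_1=\lceil 1/M_\alpha(1)\rceil$ and for integers $m\ge m_1$ let $r_m=\sup\{r>0:M_\alpha(r)<1/m\}$. The sequence $(r_m)_{m\ge m_1}$ is the $\alpha$-sequence at $x$. *)

theory Defs
  imports "HOL-Probability.Probability"
begin

definition loc_dev :: "'b measure \<Rightarrow> ('b \<Rightarrow> 'a::metric_space) \<Rightarrow> ('a \<Rightarrow> real) \<Rightarrow> 'a \<Rightarrow> real \<Rightarrow> real" where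
  "loc_dev M X \<eta> x r = (\<integral>\<omega>. indicator (cball x r) (X \<omega>) * \<bar>\<eta> (X \<omega>) - \<eta> x\<bar> \<partial>M)"

definition ball_prob :: "'b measure \<Rightarrow> ('b \<Rightarrow> 'a::metric_space) \<Rightarrow> 'a \<Rightarrow> real \<Rightarrow> real" where
  "ball_prob M X x r = measure M {\<omega> \<in> space M. X \<omega> \<in> cball x r}"

definition Malpha :: "'b measure \<Rightarrow> ('b \<Rightarrow> 'a::metric_space) \<Rightarrow> ('a \<Rightarrow> real) \<Rightarrow> 'a \<Rightarrow> real \<Rightarrow> real \<Rightarrow> real" where
  "Malpha M X \<eta> x \<alpha> r = (loc_dev M X \<eta> x r) powr \<alpha> * (ball_prob M X x r) powr (1 - \<alpha>)"

definition alpha_seq_start :: "'b measure \<Rightarrow> ('b \<Rightarrow> 'a::metric_space) \<Rightarrow> ('a \<Rightarrow> real) \<Rightarrow> 'a \<Rightarrow> real \<Rightarrow> nat" where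
  "alpha_seq_start M X \<eta> x \<alpha> = nat \<lceil>1 / Malpha M X \<eta> x \<alpha> 1\<rceil>"

text \<open>r_m = sup {r > 0. M_alpha(r) < 1/m} (meaningful for m >= m_1).\<close>
definition alpha_seq :: "'b measure \<Rightarrow> ('b \<Rightarrow> 'a::metric_space) \<Rightarrow> ('a \<Rightarrow> real) \<Rightarrow> 'a \<Rightarrow> real \<Rightarrow> nat \<Rightarrow> real" where
  "alpha_seq M X \<eta> x \<alpha> m = Sup {r. r > 0 \<and> Malpha M X \<eta> x \<alpha> r < 1 / real m}"

definition lebesgue_point :: "'b measure \<Rightarrow> ('b \<Rightarrow> 'a::metric_space) \<Rightarrow> ('a \<Rightarrow> real) \<Rightarrow> 'a \<Rightarrow> bool" where
  "lebesgue_point M X \<eta> x \<longleftrightarrow>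
     ((\<lambda>r. loc_dev M X \<eta> x r / ball_prob M X x r) \<longlongrightarrow> 0) (at_right 0)"

end

theory Submission
  imports Defs
begin

locale nnl = prob_space M for M :: "'b measure" +
  fixes X :: "nat \<Rightarrow> 'b \<Rightarrow> 'a::metric_space" and \<eta> :: "'a \<Rightarrow> real" and x :: 'a and \<alpha> :: real
    and NN :: "nat \<Rightarrow> 'b \<Rightarrow> 'a" and C :: real
  assumes meas[measurable]: "\<And>i. X i \<in> measurable M borel"
    and indep: "indep_vars (\<lambda>_. borel) X UNIV"
    and ident: "\<And>i. distr M borel (X i) = distr M borel (X 0)"
    and eta_meas[measurable]: "\<eta> \<in> borel_measurable borel"
    and Cbd: "\<And>y. \<bar>\<eta> y - \<eta> x\<bar> \<le> C"
    and support: "\<And>r. r > 0 \<Longrightarrow> ball_prob M (X 0) x r > 0"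
    and NN_meas: "\<And>m. m \<ge> 1 \<Longrightarrow> NN m \<in> measurable M borel"
    and NN_in: "\<And>m \<omega>. m \<ge> 1 \<Longrightarrow> \<omega> \<in> space M \<Longrightarrow> NN m \<omega> \<in> (\<lambda>i. X i \<omega>) ` {1..m}"
    and NN_min: "\<And>m \<omega> i. m \<ge> 1 \<Longrightarrow> \<omega> \<in> space M \<Longrightarrow> i \<in> {1..m} \<Longrightarrow>
                   dist x (NN m \<omega>) \<le> dist x (X i \<omega>)"
    and no_atom: "measure M {\<omega> \<in> space M. X 0 \<omega> = x} = 0"
    and dev_pos: "\<And>r. r > 0 \<Longrightarrow> loc_dev M (X 0) \<eta> x r > 0"
    and alpha: "0 < \<alpha>" "\<alpha> < 1"
    and leb: "lebesgue_point M (X 0) \<eta> x"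
begin

abbreviation "g y \<equiv> \<bar>\<eta> y - \<eta> x\<bar>"
abbreviation "p r \<equiv> ball_prob M (X 0) x r"
abbreviation "L r \<equiv> loc_dev M (X 0) \<eta> x r"
abbreviation "Ma r \<equiv> Malpha M (X 0) \<eta> x \<alpha> r"

lemma g_meas[measurable]: "g \<in> borel_measurable borel" by measurable

lemma ev_set: "closed S \<Longrightarrow> {\<omega> \<in> space M. X i \<omega> \<in> S} \<in> events"
proof -
  assume "closed S"
  have "{\<omega> \<in> space M. X i \<omega> \<in> S} = X i -` S \<inter> space M" by auto
  then show ?thesis using measurable_sets[OF meas borel_closed[OF \<open>closed S\<close>]] by simp
qed

lemma ev_cball[measurable]: "{\<omega> \<in> space M. X i \<omega> \<in> cball x r} \<in> events"
  by (rule ev_set) simp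

lemma p_nonneg: "0 \<le> p r" unfolding ball_prob_def by simp

lemma L_eq: "L r = (\<integral>\<omega>. indicator (cball x r) (X 0 \<omega>) * g (X 0 \<omega>) \<partial>M)"
  unfolding loc_dev_def ..

lemma bounded_int: "(f::_\<Rightarrow>real) \<in> borel_measurable M \<Longrightarrow> (\<And>\<omega>. \<omega> \<in> space M \<Longrightarrow> \<bar>f \<omega>\<bar> \<le> B) \<Longrightarrow> integrable M f"
  by (rule integrable_const_bound[where B=B]) auto


lemma int_X: "h \<in> borel_measurable borel \<Longrightarrow> (\<integral>\<omega>. h (X i \<omega>) \<partial>M) = (\<integral>\<omega>. h (X 0 \<omega>) \<partial>M)"
  for h :: "'a \<Rightarrow> real"
  using integral_distr[OF meas, of h i] integral_distr[OF meas, of h 0] ident[of i] by simp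

lemma prob_X: "closed S \<Longrightarrow> prob {\<omega>\<in>space M. X i \<omega> \<in> S} = prob {\<omega>\<in>space M. X 0 \<omega> \<in> S}"
proof -
  assume "closed S"
  have "\<And>j. {\<omega>\<in>space M. X j \<omega> \<in> S} = X j -` S \<inter> space M" by auto
  then show ?thesis using measure_distr[OF meas borel_closed[OF \<open>closed S\<close>]] ident[of i] by metis
qed

lemma C_nonneg: "0 \<le> C" using Cbd[of x] by simp

lemma int_ind: "(\<integral>\<omega>. indicator S (X i \<omega>) \<partial>M) = prob {\<omega>\<in>space M. X i \<omega> \<in> S}" if "closed S"
proof -
  have "(\<integral>\<omega>. indicator S (X i \<omega>) \<partial>M) = (\<integral>\<omega>. indicator {\<omega>\<in>space M. X i \<omega> \<in> S} \<omega> \<partial>M)"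
    by (rule Bochner_Integration.integral_cong) (auto simp: indicator_def)
  also have "\<dots> = prob {\<omega>\<in>space M. X i \<omega> \<in> S}" using ev_set[OF that] by simp
  finally show ?thesis .
qed

lemma ind_meas': "S \<in> sets borel \<Longrightarrow> (\<lambda>\<omega>. indicator S (X i \<omega>) :: real) \<in> borel_measurable M"
  by (rule measurable_compose[OF meas borel_measurable_indicator])

lemma ind_meas: "closed S \<Longrightarrow> (\<lambda>\<omega>. indicator S (X i \<omega>) :: real) \<in> borel_measurable M"
  by (rule ind_meas'[OF borel_closed])

lemma indg_meas': "S \<in> sets borel \<Longrightarrow> (\<lambda>\<omega>. indicator S (X i \<omega>) * g (X i \<omega>)) \<in> borel_measurable M"
  by (rule borel_measurable_times[OF ind_meas' measurable_compose[OF meas g_meas]])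

lemma indg_meas: "closed S \<Longrightarrow> (\<lambda>\<omega>. indicator S (X i \<omega>) * g (X i \<omega>)) \<in> borel_measurable M"
  by (rule borel_measurable_times[OF ind_meas measurable_compose[OF meas g_meas]])

lemma int_ind_g: "integrable M (\<lambda>\<omega>. indicator S (X i \<omega>) * g (X i \<omega>))" if "closed S"
  apply (rule bounded_int[where B=C])
   apply (rule indg_meas[OF that])
  using Cbd C_nonneg by (auto simp: indicator_def)

lemma int_ind_C: "integrable M (\<lambda>\<omega>. C * indicator S (X i \<omega>))" if "closed S"
  apply (rule bounded_int[where B=C])
   apply (rule borel_measurable_times[OF borel_measurable_const ind_meas[OF that]])
  using Cbd C_nonneg by (auto simp: indicator_def)

lemma L_nonneg: "0 \<le> L r" unfolding L_eq by (intro integral_nonneg_AE) auto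

lemma L_le: "L r \<le> C * p r"
proof -
  have "L r \<le> (\<integral>\<omega>. C * indicator (cball x r) (X 0 \<omega>) \<partial>M)"
    unfolding L_eq
    by (intro integral_mono int_ind_g int_ind_C) (auto simp: indicator_def Cbd C_nonneg)
  also have "\<dots> = C * p r" using int_ind[of "cball x r" 0] by (simp add: ball_prob_def)
  finally show ?thesis .
qed

lemma p_mono: "r \<le> s \<Longrightarrow> p r \<le> p s"
  unfolding ball_prob_def by (intro finite_measure_mono) (use ev_cball[of 0 s] in auto)

lemma L_mono: "r \<le> s \<Longrightarrow> L r \<le> L s"
  unfolding L_eq
  by (intro integral_mono int_ind_g) (auto simp: indicator_def)

lemma L_pos: "r > 0 \<Longrightarrow> L r > 0" using dev_pos .

lemma Ma_def': "Ma r = L r powr \<alpha> * p r powr (1 - \<alpha>)" unfolding Malpha_def ..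

lemma Ma_pos: "r > 0 \<Longrightarrow> Ma r > 0"
proof -
  assume r: "r > 0"
  show ?thesis unfolding Ma_def' using L_pos[OF r] support[OF r] by simp
qed

lemma Ma_mono: "0 < r \<Longrightarrow> r \<le> s \<Longrightarrow> Ma r \<le> Ma s"
  unfolding Ma_def' using alpha L_pos support L_mono p_mono
  by (intro mult_mono powr_mono2) (auto simp: L_nonneg p_nonneg)

lemma Ma_le: "r > 0 \<Longrightarrow> Ma r \<le> C powr \<alpha> * p r"
proof -
  assume r: "r > 0"
  have "Ma r \<le> (C * p r) powr \<alpha> * p r powr (1 - \<alpha>)"
    unfolding Ma_def' using alpha L_le L_nonneg p_nonneg
    by (intro mult_right_mono powr_mono2) auto
  also have "\<dots> = C powr \<alpha> * (p r powr \<alpha> * p r powr (1 - \<alpha>))"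
    using C_nonneg p_nonneg by (simp add: powr_mult)
  also have "\<dots> = C powr \<alpha> * p r"
    using support[OF r] by (simp add: powr_add[symmetric])
  finally show ?thesis .
qed

lemma lim_aux: "(\<lambda>n. r + c / real (Suc n)) \<longlonglongrightarrow> r"
proof -
  have "(\<lambda>n. r + c * inverse (real (Suc n))) \<longlonglongrightarrow> r + c * 0"
    by (intro tendsto_intros LIMSEQ_inverse_real_of_nat)
  then show ?thesis by (simp add: divide_inverse)
qed

lemma p_cont: assumes "c > 0" shows "(\<lambda>n. p (r + c / real (Suc n))) \<longlonglongrightarrow> p r"
proof -
  define A where "A n = {\<omega>\<in>space M. X 0 \<omega> \<in> cball x (r + c / real (Suc n))}" for n
  have "range A \<subseteq> events" unfolding A_def using ev_cball by auto
  moreover have "decseq A" unfolding decseq_def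
  proof (intro allI impI subsetI)
    fix m n \<omega> assume mn: "m \<le> n" and w: "\<omega> \<in> A n"
    have "c / real (Suc n) \<le> c / real (Suc m)" using assms mn by (intro divide_left_mono) auto
    then show "\<omega> \<in> A m" using w unfolding A_def by auto
  qed
  ultimately have "(\<lambda>n. measure M (A n)) \<longlonglongrightarrow> measure M (\<Inter>i. A i)"
    by (rule finite_Lim_measure_decseq)
  moreover have "(\<Inter>i. A i) = {\<omega>\<in>space M. X 0 \<omega> \<in> cball x r}"
  proof (intro equalityI subsetI)
    fix \<omega> assume "\<omega> \<in> (\<Inter>i. A i)"
    then have w: "\<omega> \<in> space M" "\<And>n. dist x (X 0 \<omega>) \<le> r + c / real (Suc n)"
      unfolding A_def by auto
    have "dist x (X 0 \<omega>) \<le> r"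
      by (rule LIMSEQ_le_const[OF lim_aux]) (use w in auto)
    then show "\<omega> \<in> {\<omega>\<in>space M. X 0 \<omega> \<in> cball x r}" using w by auto
  next
    fix \<omega> assume "\<omega> \<in> {\<omega>\<in>space M. X 0 \<omega> \<in> cball x r}"
    then have w: "\<omega> \<in> space M" "dist x (X 0 \<omega>) \<le> r" by auto
    have "dist x (X 0 \<omega>) \<le> r + c / real (Suc n)" for n
      by (rule add_increasing2) (use assms w in auto)
    then show "\<omega> \<in> (\<Inter>i. A i)" unfolding A_def using w by auto
  qed
  ultimately show ?thesis unfolding A_def ball_prob_def by simp
qed

lemma p0: "p 0 = 0"
proof -
  have "{\<omega>\<in>space M. X 0 \<omega> \<in> cball x 0} = {\<omega> \<in> space M. X 0 \<omega> = x}" by auto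
  then show ?thesis unfolding ball_prob_def using no_atom by simp
qed

lemma p_small: "e > 0 \<Longrightarrow> \<exists>r>0. p r < e"
proof -
  assume e: "e > 0"
  from p_cont[of 1 0] have "(\<lambda>n. p (1 / real (Suc n))) \<longlonglongrightarrow> 0" by (simp add: p0)
  from order_tendstoD(2)[OF this e] obtain n where "p (1 / real (Suc n)) < e"
    by (auto dest: eventually_happens)
  then show ?thesis by (intro exI[of _ "1 / real (Suc n)"]) auto
qed

definition "Lo r = (\<integral>\<omega>. indicator (ball x r) (X 0 \<omega>) * g (X 0 \<omega>) \<partial>M)"

lemma Lo_bound: assumes r: "r > 0" and b: "\<And>s. 0 < s \<Longrightarrow> s < r \<Longrightarrow> L s \<le> b" shows "Lo r \<le> b"
proof -
  define s where "s n = r + (- r) / real (Suc (Suc n))" for n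
  have s_lim: "s \<longlonglongrightarrow> r" unfolding s_def
    by (rule LIMSEQ_Suc[OF lim_aux[of r "- r"]])
  have s_bd: "0 < s n" "s n < r" for n
    using r unfolding s_def by (auto simp: field_simps intro!: add_pos_nonneg)
  have lim: "(\<lambda>n. \<integral>\<omega>. indicator (cball x (s n)) (X 0 \<omega>) * g (X 0 \<omega>) \<partial>M) \<longlonglongrightarrow> Lo r"
    unfolding Lo_def
  proof (rule integral_dominated_convergence[where w="\<lambda>_. C"])
    show "(\<lambda>\<omega>. indicator (ball x r) (X 0 \<omega>) * g (X 0 \<omega>)) \<in> borel_measurable M"
      by (rule indg_meas') simp
    show "(\<lambda>\<omega>. indicator (cball x (s n)) (X 0 \<omega>) * g (X 0 \<omega>)) \<in> borel_measurable M" for n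
      by (rule indg_meas) simp
    show "integrable M (\<lambda>_. C)" by simp
    show "AE \<omega> in M. norm (indicator (cball x (s n)) (X 0 \<omega>) * g (X 0 \<omega>)) \<le> C" for n
      using Cbd C_nonneg by (auto simp: indicator_def)
    show "AE \<omega> in M. (\<lambda>n. indicator (cball x (s n)) (X 0 \<omega>) * g (X 0 \<omega>))
            \<longlonglongrightarrow> indicator (ball x r) (X 0 \<omega>) * g (X 0 \<omega>)"
    proof (intro AE_I2 tendsto_eventually)
      fix \<omega>
      show "\<forall>\<^sub>F n in sequentially. indicator (cball x (s n)) (X 0 \<omega>) * g (X 0 \<omega>)
            = indicator (ball x r) (X 0 \<omega>) * g (X 0 \<omega>)"
      proof (cases "dist x (X 0 \<omega>) < r")
        case True
        from order_tendstoD(1)[OF s_lim True] show ?thesis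
          by eventually_elim (use True in \<open>auto simp: indicator_def\<close>)
      next
        case False
        have "\<not> dist x (X 0 \<omega>) \<le> s n" for n using False s_bd(2)[of n] by linarith
        then show ?thesis using False by (intro always_eventually) (auto simp: indicator_def)
      qed
    qed
  qed
  have bnd: "(\<integral>\<omega>. indicator (cball x (s n)) (X 0 \<omega>) * g (X 0 \<omega>) \<partial>M) \<le> b" for n
    using b[OF s_bd(1,2)] unfolding L_eq .
  show ?thesis by (rule LIMSEQ_le_const2[OF lim]) (use bnd in blast)
qed

definition "R m = alpha_seq M (X 0) \<eta> x \<alpha> m"

lemma rseq:
  assumes r0: "r0 > 0" and m: "m \<ge> 1" and mr: "1 / real m \<le> Ma r0"
  shows "0 < R m" "R m \<le> r0" "\<And>s. 0 < s \<Longrightarrow> s < R m \<Longrightarrow> Ma s < 1 / real m"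
    "\<And>s. R m < s \<Longrightarrow> 1 / real m \<le> Ma s"
proof -
  define S where "S = {r. r > 0 \<and> Ma r < 1 / real m}"
  have R: "R m = Sup S" unfolding R_def alpha_seq_def S_def ..
  have "C powr \<alpha> + 1 > 0" by (smt (verit) powr_ge_zero)
  then obtain r where r: "r > 0" "p r < 1 / (real m * (C powr \<alpha> + 1))"
    using p_small[of "1 / (real m * (C powr \<alpha> + 1))"] m by auto
  have "Ma r \<le> C powr \<alpha> * p r" using Ma_le[OF r(1)] .
  also have "\<dots> \<le> (C powr \<alpha> + 1) * p r" using p_nonneg[of r] by (intro mult_right_mono) auto
  also have "\<dots> < (C powr \<alpha> + 1) * (1 / (real m * (C powr \<alpha> + 1)))"
    using r(2) \<open>C powr \<alpha> + 1 > 0\<close> by (intro mult_strict_left_mono) auto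
  also have "\<dots> = 1 / real m" using \<open>C powr \<alpha> + 1 > 0\<close> by simp
  finally have rS: "r \<in> S" unfolding S_def using r by auto
  have Sb: "t < r0" if "t \<in> S" for t
  proof (rule ccontr)
    assume "\<not> t < r0"
    then have "Ma r0 \<le> Ma t" using r0 by (intro Ma_mono) auto
    then show False using that mr unfolding S_def by auto
  qed
  have bdd: "bdd_above S" using Sb by (auto intro!: bdd_aboveI[of _ r0] less_imp_le)
  have "r \<le> Sup S" by (rule cSup_upper[OF rS bdd])
  then show "0 < R m" using r R by auto
  show "R m \<le> r0" unfolding R using rS Sb by (intro cSup_least) (auto intro: less_imp_le)
  show "Ma s < 1 / real m" if "0 < s" "s < R m" for s
  proof -
    from that have "s < Sup S" using R by simp
    then obtain t where t: "t \<in> S" "s < t" using less_cSup_iff[of S s] rS bdd by auto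
    have "Ma s \<le> Ma t" using that t by (intro Ma_mono) auto
    then show ?thesis using t unfolding S_def by auto
  qed
  show "1 / real m \<le> Ma s" if "R m < s" for s
  proof (rule ccontr)
    assume "\<not> 1 / real m \<le> Ma s"
    moreover have "s > 0" using that \<open>0 < r\<close> \<open>r \<le> Sup S\<close> R by auto
    ultimately have "s \<in> S" unfolding S_def by auto
    then have "s \<le> Sup S" by (rule cSup_upper[OF _ bdd])
    then show False using that R by simp
  qed
qed

lemma ev_r: "r0 > 0 \<Longrightarrow> eventually (\<lambda>m. m \<ge> 1 \<and> 1 / real m \<le> Ma r0) sequentially"
proof -
  assume r0: "r0 > 0"
  have Mp: "Ma r0 > 0" by (rule Ma_pos[OF r0])
  show ?thesis
  proof (rule eventually_sequentiallyI[of "nat \<lceil>1 / Ma r0\<rceil> + 1"])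
    fix m assume m: "nat \<lceil>1 / Ma r0\<rceil> + 1 \<le> m"
    then have "1 / Ma r0 \<le> real m" by linarith
    then have "1 / real m \<le> Ma r0" using Mp m by (simp add: field_simps)
    then show "m \<ge> 1 \<and> 1 / real m \<le> Ma r0" using m by simp
  qed
qed

lemma leb_bound: assumes d: "\<delta> > 0" shows "\<exists>r0>0. \<forall>s. 0 < s \<longrightarrow> s \<le> r0 \<longrightarrow> L s \<le> \<delta> * p s"
proof -
  have "((\<lambda>r. L r / p r) \<longlongrightarrow> 0) (at_right 0)"
    using leb unfolding lebesgue_point_def .
  from order_tendstoD(2)[OF this d] obtain b where b: "b > 0" "\<And>y. 0 < y \<Longrightarrow> y < b \<Longrightarrow> L y / p y < \<delta>"
    unfolding eventually_at_right_field by auto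
  show ?thesis
  proof (intro exI[of _ "b/2"] conjI allI impI)
    fix s assume s: "0 < s" "s \<le> b / 2"
    then have "L s / p s < \<delta>" using b by auto
    then show "L s \<le> \<delta> * p s" using support[OF s(1)] by (simp add: divide_less_eq)
  qed (use b in auto)
qed

lemma boundA:
  assumes d: "\<delta> > 0" and s: "0 < s" and Ls: "L s \<le> \<delta> * p s" and Ma: "Ma s < 1 / real m" and m: "m \<ge> 1"
  shows "real m * L s \<le> \<delta> powr (1 - \<alpha>)"
proof -
  have Lp: "L s > 0" "p s > 0" using L_pos[OF s] support[OF s] by auto
  have "L s = L s powr \<alpha> * L s powr (1 - \<alpha>)" using Lp by (simp add: powr_add[symmetric])
  also have "\<dots> \<le> L s powr \<alpha> * (\<delta> * p s) powr (1 - \<alpha>)"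
    using Lp Ls alpha by (intro mult_left_mono powr_mono2) auto
  also have "\<dots> = \<delta> powr (1 - \<alpha>) * Ma s"
    unfolding Ma_def' using d Lp by (simp add: powr_mult)
  also have "\<dots> \<le> \<delta> powr (1 - \<alpha>) * (1 / real m)"
    using Ma by (intro mult_left_mono) auto
  finally have "L s \<le> \<delta> powr (1 - \<alpha>) * (1 / real m)" .
  then show ?thesis using m by (simp add: field_simps)
qed

lemma boundB:
  assumes d: "\<delta> > 0" and s: "0 < s" and Ls: "L s \<le> \<delta> * p s"
  shows "Ma s \<le> \<delta> powr \<alpha> * p s"
proof -
  have Lp: "L s > 0" "p s > 0" using L_pos[OF s] support[OF s] by auto
  have "Ma s \<le> (\<delta> * p s) powr \<alpha> * p s powr (1 - \<alpha>)"
    unfolding Ma_def' using Lp Ls alpha by (intro mult_right_mono powr_mono2) auto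
  also have "\<dots> = \<delta> powr \<alpha> * (p s powr \<alpha> * p s powr (1 - \<alpha>))"
    using d Lp by (simp add: powr_mult)
  also have "\<dots> = \<delta> powr \<alpha> * p s" using Lp by (simp add: powr_add[symmetric])
  finally show ?thesis .
qed

lemma Lo_nonneg: "0 \<le> Lo r" unfolding Lo_def by (intro integral_nonneg_AE) auto

lemma T1: "(\<lambda>m. real m * Lo (R m)) \<longlonglongrightarrow> 0"
proof (rule LIMSEQ_I)
  fix e :: real assume e: "0 < e"
  define \<delta> where "\<delta> = (e/2) powr (1 / (1 - \<alpha>))"
  have d: "\<delta> > 0" unfolding \<delta>_def using e by simp
  have d2: "\<delta> powr (1 - \<alpha>) = e / 2" unfolding \<delta>_def using e alpha by (simp add: powr_powr)
  obtain r0 where r0: "r0 > 0" "\<And>s. 0 < s \<Longrightarrow> s \<le> r0 \<Longrightarrow> L s \<le> \<delta> * p s"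
    using leb_bound[OF d] by auto
  from ev_r[OF r0(1)] obtain N where N: "\<And>m. m \<ge> N \<Longrightarrow> m \<ge> 1 \<and> 1 / real m \<le> Ma r0"
    unfolding eventually_sequentially by auto
  show "\<exists>no. \<forall>n\<ge>no. norm (real n * Lo (R n) - 0) < e"
  proof (intro exI allI impI)
    fix m assume "m \<ge> N"
    then have m: "m \<ge> 1" "1 / real m \<le> Ma r0" using N by auto
    note rs = rseq[OF r0(1) m]
    have "Lo (R m) \<le> (e/2) / real m"
    proof (rule Lo_bound[OF rs(1)])
      fix s assume s: "0 < s" "s < R m"
      have "real m * L s \<le> e / 2"
        using boundA[OF d s(1) r0(2)[OF s(1)] rs(3)[OF s] m(1)] rs(2) s d2 by auto
      then show "L s \<le> (e/2) / real m" using m by (simp add: field_simps)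
    qed
    then have "real m * Lo (R m) \<le> e / 2" using m by (simp add: field_simps)
    then show "norm (real m * Lo (R m) - 0) < e" using Lo_nonneg[of "R m"] e by simp
  qed
qed

lemma T2: "filterlim (\<lambda>m. real m * p (R m)) at_top sequentially"
  unfolding filterlim_at_top
proof
  fix K :: real
  define K' where "K' = max K 1"
  have K': "K' > 0" "K \<le> K'" unfolding K'_def by auto
  define \<delta> where "\<delta> = (1 / K') powr (1 / \<alpha>)"
  have d: "\<delta> > 0" unfolding \<delta>_def using K' by simp
  have d2: "\<delta> powr \<alpha> = 1 / K'" unfolding \<delta>_def using K' alpha by (simp add: powr_powr)
  obtain r0 where r0: "r0 > 0" "\<And>s. 0 < s \<Longrightarrow> s \<le> r0 \<Longrightarrow> L s \<le> \<delta> * p s"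
    using leb_bound[OF d] by auto
  have r02: "r0 / 2 > 0" using r0 by simp
  show "\<forall>\<^sub>F m in sequentially. K \<le> real m * p (R m)"
    using ev_r[OF r02]
  proof eventually_elim
    fix m assume m: "m \<ge> 1 \<and> 1 / real m \<le> Ma (r0 / 2)"
    note rs = rseq[OF r02 conjunct1[OF m] conjunct2[OF m]]
    have ps: "K' / real m \<le> p s" if s: "R m < s" "s \<le> r0" for s
    proof -
      have s0: "0 < s" using rs(1) s by simp
      have "1 / real m \<le> Ma s" using rs(4)[OF s(1)] .
      also have "\<dots> \<le> \<delta> powr \<alpha> * p s" by (rule boundB[OF d s0 r0(2)[OF s0 s(2)]])
      finally have "1 / real m \<le> p s / K'" using d2 by simp
      then show ?thesis using K' m by (simp add: field_simps)
    qed
    have "K' / real m \<le> p (R m)"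
    proof (rule LIMSEQ_le_const[OF p_cont[OF r02, of "R m"]])
      show "\<exists>N. \<forall>n\<ge>N. K' / real m \<le> p (R m + r0 / 2 / real (Suc n))"
      proof (intro exI allI impI)
        fix n :: nat
        define c where "c = r0 / 2 / real (Suc n)"
        have c1: "c \<le> r0 / 2" unfolding c_def using r0 by (simp add: divide_le_eq)
        have c2: "c > 0" unfolding c_def using r0 by simp
        have "K' / real m \<le> p (R m + c)"
          by (rule ps) (use rs(2) c1 c2 in linarith)+
        then show "K' / real m \<le> p (R m + r0 / 2 / real (Suc n))" unfolding c_def .
      qed
    qed
    then have "K' \<le> real m * p (R m)" using m by (simp add: field_simps)
    then show "K \<le> real m * p (R m)" using K' by simp
  qed
qed

lemma p_le1: "p r \<le> 1" unfolding ball_prob_def by simp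

lemma T3: "(\<lambda>m. (1 - p (R m)) ^ m) \<longlonglongrightarrow> 0"
proof (rule tendsto_sandwich[where f="\<lambda>_. 0" and h="\<lambda>m. exp (- (real m * p (R m)))"])
  have "filterlim (\<lambda>m. exp (- (real m * p (R m)))) (nhds 0) sequentially"
    by (intro filterlim_compose[OF exp_at_bot] filterlim_compose[OF filterlim_uminus_at_bot_at_top T2])
  then show "(\<lambda>m. exp (- (real m * p (R m)))) \<longlonglongrightarrow> 0" .
  show "\<forall>\<^sub>F n in sequentially. 0 \<le> (1 - p (R n)) ^ n" using p_le1 by simp
  show "\<forall>\<^sub>F n in sequentially. (1 - p (R n)) ^ n \<le> exp (- (real n * p (R n)))"
  proof (intro always_eventually allI)
    fix n
    have "(1 - p (R n)) ^ n \<le> exp (- p (R n)) ^ n"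
      using p_le1[of "R n"] exp_ge_add_one_self[of "- p (R n)"] by (intro power_mono) auto
    also have "\<dots> = exp (- (real n * p (R n)))" by (simp add: exp_of_nat_mult[symmetric])
    finally show "(1 - p (R n)) ^ n \<le> exp (- (real n * p (R n)))" .
  qed
qed simp

definition "E m r = (\<Inter>i\<in>{1..m}. X i -` (- cball x r) \<inter> space M)"

lemma preim_ev: "X i -` (- cball x r) \<inter> space M \<in> events"
  by (rule measurable_sets[OF meas]) (simp add: borel_open open_Compl)

lemma E_ev: "m \<ge> 1 \<Longrightarrow> E m r \<in> events"
  unfolding E_def by (intro sets.finite_INT preim_ev) auto

lemma indep_prob: assumes m: "m \<ge> 1" shows "prob (E m r) = (1 - p r) ^ m"
proof -
  have ind: "indep_sets (\<lambda>i. {X i -` A \<inter> space M | A. A \<in> sets borel}) UNIV"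
    using indep unfolding indep_vars_def2 by simp
  have "prob (E m r) = (\<Prod>i\<in>{1..m}. prob (X i -` (- cball x r) \<inter> space M))"
    unfolding E_def
  proof (rule indep_setsD[OF ind])
    show "\<forall>j\<in>{1..m}. X j -` (- cball x r) \<inter> space M \<in> {X j -` A \<inter> space M |A. A \<in> sets borel}"
      by (auto intro!: exI[of _ "- cball x r"] borel_open open_Compl)
  qed (use m in auto)
  also have "\<dots> = (\<Prod>i\<in>{1..m}. 1 - p r)"
  proof (rule prod.cong[OF refl])
    fix i
    have "X i -` (- cball x r) \<inter> space M = space M - {\<omega>\<in>space M. X i \<omega> \<in> cball x r}" by auto
    then have "prob (X i -` (- cball x r) \<inter> space M) = 1 - prob {\<omega>\<in>space M. X i \<omega> \<in> cball x r}"
      using prob_compl[OF ev_cball[of i r]] by simp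
    then show "prob (X i -` (- cball x r) \<inter> space M) = 1 - p r"
      using prob_X[of "cball x r" i] unfolding ball_prob_def by simp
  qed
  finally show ?thesis by simp
qed

lemma Y_indg_meas: "Y \<in> measurable M borel \<Longrightarrow> S \<in> sets borel \<Longrightarrow>
    (\<lambda>\<omega>. indicator S (Y \<omega>) * g (Y \<omega>)) \<in> borel_measurable M"
  by (rule borel_measurable_times[OF measurable_compose[OF _ borel_measurable_indicator] measurable_compose[OF _ g_meas]])

lemma Y_indg_int: "Y \<in> measurable M borel \<Longrightarrow> S \<in> sets borel \<Longrightarrow>
    integrable M (\<lambda>\<omega>. indicator S (Y \<omega>) * g (Y \<omega>))"
  apply (rule bounded_int[where B=C])
   apply (rule Y_indg_meas, assumption, assumption)
  using Cbd C_nonneg by (auto simp: indicator_def)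

lemma Y_g_int: "Y \<in> measurable M borel \<Longrightarrow> integrable M (\<lambda>\<omega>. g (Y \<omega>))"
  apply (rule bounded_int[where B=C])
   apply (rule measurable_compose[OF _ g_meas], assumption)
  using Cbd by auto

lemma decomp:
  assumes m: "m \<ge> 1"
  shows "(\<integral>\<omega>. g (NN m \<omega>) \<partial>M) \<le> real m * Lo r
     + (\<integral>\<omega>. indicator (sphere x r) (NN m \<omega>) * g (NN m \<omega>) \<partial>M) + C * (1 - p r) ^ m"
proof -
  note Y = NN_meas[OF m]
  have bs1: "ball x r \<in> sets borel" by (rule borel_open[OF open_ball])
  have bs2: "sphere x r \<in> sets borel" unfolding cball_diff_eq_sphere[symmetric]
    by (intro sets.Diff borel_closed borel_open) auto
  have bs3: "- cball x r \<in> sets borel" by (rule borel_open[OF open_Compl[OF closed_cball]])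
  note bs = bs1 bs2 bs3
  let ?f = "\<lambda>S \<omega>. indicator S (NN m \<omega>) * g (NN m \<omega>)"
  have split: "g (NN m \<omega>) = ?f (ball x r) \<omega> + ?f (sphere x r) \<omega> + ?f (- cball x r) \<omega>" for \<omega>
    by (cases "dist x (NN m \<omega>) < r"; cases "dist x (NN m \<omega>) = r") (auto simp: indicator_def)
  have "(\<integral>\<omega>. g (NN m \<omega>) \<partial>M) = (\<integral>\<omega>. ?f (ball x r) \<omega> + ?f (sphere x r) \<omega> + ?f (- cball x r) \<omega> \<partial>M)"
    by (subst split) rule
  also have "\<dots> = (\<integral>\<omega>. ?f (ball x r) \<omega> \<partial>M) + (\<integral>\<omega>. ?f (sphere x r) \<omega> \<partial>M) + (\<integral>\<omega>. ?f (- cball x r) \<omega> \<partial>M)"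
    using Y_indg_int[OF Y bs(1)] Y_indg_int[OF Y bs(2)] Y_indg_int[OF Y bs(3)]
    by (simp add: Bochner_Integration.integral_add)
  also have "(\<integral>\<omega>. ?f (ball x r) \<omega> \<partial>M) \<le> real m * Lo r"
  proof -
    have hm: "(\<lambda>y. indicator (ball x r) y * g y) \<in> borel_measurable borel"
      by (intro borel_measurable_times borel_measurable_indicator g_meas) (simp add: borel_open)
    have "(\<integral>\<omega>. ?f (ball x r) \<omega> \<partial>M) \<le> (\<integral>\<omega>. (\<Sum>i\<in>{1..m}. indicator (ball x r) (X i \<omega>) * g (X i \<omega>)) \<partial>M)"
    proof (rule integral_mono)
      show "integrable M (?f (ball x r))" by (rule Y_indg_int[OF Y bs(1)])
      show "integrable M (\<lambda>\<omega>. \<Sum>i\<in>{1..m}. indicator (ball x r) (X i \<omega>) * g (X i \<omega>))"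
        by (rule Bochner_Integration.integrable_sum) (rule Y_indg_int[OF meas bs(1)])
      fix \<omega> assume w: "\<omega> \<in> space M"
      from NN_in[OF m w] obtain j where j: "j \<in> {1..m}" "NN m \<omega> = X j \<omega>" by auto
      show "?f (ball x r) \<omega> \<le> (\<Sum>i\<in>{1..m}. indicator (ball x r) (X i \<omega>) * g (X i \<omega>))"
        unfolding j(2) by (rule member_le_sum[OF j(1)]) auto
    qed
    also have "\<dots> = (\<Sum>i\<in>{1..m}. \<integral>\<omega>. indicator (ball x r) (X i \<omega>) * g (X i \<omega>) \<partial>M)"
      by (intro Bochner_Integration.integral_sum Y_indg_int[OF meas bs(1)])
    also have "\<dots> = (\<Sum>i\<in>{1..m}. Lo r)"
      unfolding Lo_def by (intro sum.cong refl int_X[OF hm])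
    finally show ?thesis by simp
  qed
  also have "(\<integral>\<omega>. ?f (- cball x r) \<omega> \<partial>M) \<le> C * (1 - p r) ^ m"
  proof -
    have "(\<integral>\<omega>. ?f (- cball x r) \<omega> \<partial>M) \<le> (\<integral>\<omega>. C * indicator (E m r) \<omega> \<partial>M)"
    proof (rule integral_mono)
      show "integrable M (?f (- cball x r))" by (rule Y_indg_int[OF Y bs(3)])
      show "integrable M (\<lambda>\<omega>. C * indicator (E m r) \<omega>)"
        apply (rule bounded_int[where B=C])
         apply (intro borel_measurable_times borel_measurable_const borel_measurable_indicator E_ev[OF m])
        using C_nonneg by (auto simp: indicator_def)
      fix \<omega> assume w: "\<omega> \<in> space M"
      show "?f (- cball x r) \<omega> \<le> C * indicator (E m r) \<omega>"
      proof (cases "NN m \<omega> \<in> cball x r")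
        case True then show ?thesis using C_nonneg by (simp add: indicator_def)
      next
        case False
        have "\<omega> \<in> E m r" unfolding E_def
        proof (intro INT_I)
          fix i assume "i \<in> {1..m}"
          from NN_min[OF m w this] False show "\<omega> \<in> X i -` (- cball x r) \<inter> space M" using w by auto
        qed
        then show ?thesis using False Cbd by (simp add: indicator_def)
      qed
    qed
    also have "\<dots> = C * prob (E m r)" using E_ev[OF m] by simp
    finally show ?thesis using indep_prob[OF m] by simp
  qed
  finally show ?thesis by simp
qed

end

theorem mainTheorem6:
  fixes M :: "'b measure" and X :: "nat \<Rightarrow> 'b \<Rightarrow> 'a::metric_space"
    and \<eta> :: "'a \<Rightarrow> real" and x :: 'a and \<alpha> :: real
    and NN :: "nat \<Rightarrow> 'b \<Rightarrow> 'a"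
  assumes P: "prob_space M"
    and meas: "\<And>i. X i \<in> measurable M borel"
    and indep: "prob_space.indep_vars M (\<lambda>_. borel) X UNIV"
    and ident: "\<And>i. distr M borel (X i) = distr M borel (X 0)"
    and eta_meas: "\<eta> \<in> borel_measurable borel"
    and eta_bdd: "bounded (range \<eta>)"
    and support: "\<And>r. r > 0 \<Longrightarrow> ball_prob M (X 0) x r > 0"
    and NN_meas: "\<And>m. m \<ge> 1 \<Longrightarrow> NN m \<in> measurable M borel"
    and NN_in: "\<And>m \<omega>. m \<ge> 1 \<Longrightarrow> \<omega> \<in> space M \<Longrightarrow> NN m \<omega> \<in> (\<lambda>i. X i \<omega>) ` {1..m}"
    and NN_min: "\<And>m \<omega> i. m \<ge> 1 \<Longrightarrow> \<omega> \<in> space M \<Longrightarrow> i \<in> {1..m} \<Longrightarrow>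
                   dist x (NN m \<omega>) \<le> dist x (X i \<omega>)"
    and no_atom: "measure M {\<omega> \<in> space M. X 0 \<omega> = x} = 0"
    and dev_pos: "\<And>r. r > 0 \<Longrightarrow> loc_dev M (X 0) \<eta> x r > 0"
    and alpha: "0 < \<alpha>" "\<alpha> < 1"
    and leb: "lebesgue_point M (X 0) \<eta> x"
  shows "((\<lambda>m. \<integral>\<omega>. \<bar>\<eta> (NN m \<omega>) - \<eta> x\<bar> \<partial>M) \<longlonglongrightarrow> 0)
     \<longleftrightarrow> ((\<lambda>m. \<integral>\<omega>. indicator (sphere x (alpha_seq M (X 0) \<eta> x \<alpha> m)) (NN m \<omega>)
                          * \<bar>\<eta> (NN m \<omega>) - \<eta> x\<bar> \<partial>M) \<longlonglongrightarrow> 0)"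
proof -
  interpret prob_space M by (rule P)
  obtain a where a: "\<And>y. y \<in> range \<eta> \<Longrightarrow> norm y \<le> a"
    using eta_bdd unfolding bounded_iff by auto
  have Cbd: "\<bar>\<eta> y - \<eta> x\<bar> \<le> 2 * a" for y
    using a[of "\<eta> y"] a[of "\<eta> x"] by auto
  interpret N: nnl M X \<eta> x \<alpha> NN "2 * a"
    by (unfold_locales) (use assms Cbd in auto)
  let ?G = "\<lambda>m. \<integral>\<omega>. \<bar>\<eta> (NN m \<omega>) - \<eta> x\<bar> \<partial>M"
  let ?T = "\<lambda>m. \<integral>\<omega>. indicator (sphere x (alpha_seq M (X 0) \<eta> x \<alpha> m)) (NN m \<omega>)
                          * \<bar>\<eta> (NN m \<omega>) - \<eta> x\<bar> \<partial>M"
  have T_nonneg: "0 \<le> ?T m" for m by (intro integral_nonneg_AE) auto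
  have G_nonneg: "0 \<le> ?G m" for m by (intro integral_nonneg_AE) auto
  have sph: "sphere x r \<in> sets borel" for r unfolding cball_diff_eq_sphere[symmetric]
    by (intro sets.Diff borel_closed borel_open) auto
  have TG: "?T m \<le> ?G m" if m: "m \<ge> 1" for m
    by (intro integral_mono N.Y_indg_int[OF NN_meas[OF m] sph] N.Y_g_int[OF NN_meas[OF m]])
       (auto simp: indicator_def)
  show ?thesis
  proof
    assume G: "?G \<longlonglongrightarrow> 0"
    show "?T \<longlonglongrightarrow> 0"
    proof (rule tendsto_sandwich[where f="\<lambda>_. 0" and h="?G"])
      show "\<forall>\<^sub>F n in sequentially. 0 \<le> ?T n" using T_nonneg by simp
      show "\<forall>\<^sub>F n in sequentially. ?T n \<le> ?G n"
        using eventually_ge_at_top[of 1] by eventually_elim (rule TG)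
    qed (use G in auto)
  next
    assume T: "?T \<longlonglongrightarrow> 0"
    let ?H = "\<lambda>m. real m * N.Lo (N.R m) + ?T m + 2 * a * (1 - N.p (N.R m)) ^ m"
    show "?G \<longlonglongrightarrow> 0"
    proof (rule tendsto_sandwich[where f="\<lambda>_. 0" and h="?H"])
      show "\<forall>\<^sub>F n in sequentially. 0 \<le> ?G n" using G_nonneg by simp
      show "\<forall>\<^sub>F n in sequentially. ?G n \<le> ?H n"
        using eventually_ge_at_top[of 1]
      proof eventually_elim
        fix m :: nat assume m: "m \<ge> 1"
        show "?G m \<le> ?H m" using N.decomp[OF m, of "N.R m"] unfolding N.R_def .
      qed
      have "?H \<longlonglongrightarrow> 0 + 0 + 2 * a * 0"
        by (intro tendsto_add tendsto_mult tendsto_const N.T1 T N.T3)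
      then show "?H \<longlonglongrightarrow> 0" by simp
    qed simp
  qed
qed

end
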